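(* There exist series-parallel graphs of girth 6 that do not belong to 2-CBU.
   Context: Let $e_1,e_2$ be the standard basis of $\mathbb{R}^2$. A graph belongs to 2-CBU if one can assign to each vertex an axis-parallel rectangle (product of two closed intervals of positive length) in $\mathbb{R}^2$ such that the rectangles have pairwise disjoint interiors, two distinct vertices are adjacent iff their rectangles intersect, and any two intersecting rectangles intersect in a segment of positive length orthogonal to $e_1$. *)

theory Defs
  imports "HOL-Analysis.Analysis"
begin

definition simple_graph :: "'a set \<Rightarrow> ('a \<Rightarrow> 'a \<Rightarrow> bool) \<Rightarrow> bool" where
  "simple_graph V E \<longleftrightarrow> finite V \<and>
     (\<forall>u v. E u v \<longrightarrow> u \<in> V \<and> v \<in> V \<and> u \<noteq> v \<and> E v u)"

definition is_cycle :: "('a \<Rightarrow> 'a \<Rightarrow> bool) \<Rightarrow> 'a list \<Rightarrow> bool" where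
  "is_cycle E cs \<longleftrightarrow> length cs \<ge> 3 \<and> distinct cs \<and>
     (\<forall>i < length cs. E (cs ! i) (cs ! ((i + 1) mod length cs)))"

definition has_girth :: "('a \<Rightarrow> 'a \<Rightarrow> bool) \<Rightarrow> nat \<Rightarrow> bool" where
  "has_girth E k \<longleftrightarrow> (\<exists>cs. is_cycle E cs \<and> length cs = k) \<and>
     (\<forall>cs. is_cycle E cs \<longrightarrow> k \<le> length cs)"

definition connected_set :: "('a \<Rightarrow> 'a \<Rightarrow> bool) \<Rightarrow> 'a set \<Rightarrow> bool" where
  "connected_set E S \<longleftrightarrow> S \<noteq> {} \<and>
     (\<forall>u\<in>S. \<forall>v\<in>S. (\<lambda>x y. E x y \<and> x \<in> S \<and> y \<in> S)\<^sup>*\<^sup>* u v)"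

definition has_K4_minor :: "'a set \<Rightarrow> ('a \<Rightarrow> 'a \<Rightarrow> bool) \<Rightarrow> bool" where
  "has_K4_minor V E \<longleftrightarrow> (\<exists>B :: nat \<Rightarrow> 'a set.
     (\<forall>i < 4. B i \<subseteq> V \<and> connected_set E (B i)) \<and>
     (\<forall>i < 4. \<forall>j < 4. i \<noteq> j \<longrightarrow> B i \<inter> B j = {} \<and> (\<exists>u \<in> B i. \<exists>v \<in> B j. E u v)))"

definition series_parallel :: "'a set \<Rightarrow> ('a \<Rightarrow> 'a \<Rightarrow> bool) \<Rightarrow> bool" where
  "series_parallel V E \<longleftrightarrow> simple_graph V E \<and> \<not> has_K4_minor V E"

definition is_rect :: "(real \<times> real) set \<Rightarrow> bool" where
  "is_rect R \<longleftrightarrow> (\<exists>a b c d. a < b \<and> c < d \<and> R = {a..b} \<times> {c..d})"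

text \<open>Membership in 2-CBU. Segments orthogonal to e1 are vertical: {x} x [c,d].\<close>
definition in_2CBU :: "'a set \<Rightarrow> ('a \<Rightarrow> 'a \<Rightarrow> bool) \<Rightarrow> bool" where
  "in_2CBU V E \<longleftrightarrow> (\<exists>R :: 'a \<Rightarrow> (real \<times> real) set.
     (\<forall>v \<in> V. is_rect (R v)) \<and>
     (\<forall>u \<in> V. \<forall>v \<in> V. u \<noteq> v \<longrightarrow> interior (R u) \<inter> interior (R v) = {}) \<and>
     (\<forall>u \<in> V. \<forall>v \<in> V. u \<noteq> v \<longrightarrow> (E u v \<longleftrightarrow> R u \<inter> R v \<noteq> {})) \<and>
     (\<forall>u \<in> V. \<forall>v \<in> V. u \<noteq> v \<and> R u \<inter> R v \<noteq> {} \<longrightarrow>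
        (\<exists>x c d. c < d \<and> R u \<inter> R v = {x} \<times> {c..d})))"

end

theory Submission
  imports Defs
begin


definition lft :: "nat \<Rightarrow> nat" where
  "lft v = (if v mod 4 = 0 then 110 + v div 12 else v - 1)"
definition rgt :: "nat \<Rightarrow> nat" where
  "rgt v = (if v mod 4 = 3 then 119 + v div 12 else v + 1)"

definition nb :: "nat \<Rightarrow> nat list" where
  "nb v = (if v < 108 then [lft v, rgt v]
    else if v = 108 then [110..<119]
    else if v = 109 then [119..<128]
    else if v < 119 then [108, v + 9, 12*(v-110), 12*(v-110)+4, 12*(v-110)+8]
    else if v < 128 then [109, v - 9, 12*(v-119)+3, 12*(v-119)+7, 12*(v-119)+11]
    else [])"

definition GE :: "nat \<Rightarrow> nat \<Rightarrow> bool" where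
  "GE u v \<longleftrightarrow> v \<in> set (nb u)"

lemma F1: "list_all (\<lambda>u. list_all (\<lambda>v. v < 128 \<and> v \<noteq> u \<and> u \<in> set (nb v)) (nb u)) [0..<128]"
  by code_simp



lemma GE_bound: assumes "GE u v" shows "u < 128"
proof (rule ccontr)
  assume "\<not> u < 128"
  then have "nb u = []" by (simp add: nb_def)
  then show False using assms by (simp add: GE_def)
qed

lemma GE_props: assumes "GE u v" shows "u < 128 \<and> v < 128 \<and> u \<noteq> v \<and> GE v u"
proof -
  have u: "u < 128" using GE_bound[OF assms] .
  have all: "\<forall>x\<in>set [0..<128]. list_all (\<lambda>v. v < 128 \<and> v \<noteq> x \<and> x \<in> set (nb v)) (nb x)"
    using F1 by (simp only: list_all_iff)
  have "u \<in> set [0..<128]" using u by (simp only: set_upt atLeastLessThan_iff) simp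
  then have "list_all (\<lambda>v. v < 128 \<and> v \<noteq> u \<and> u \<in> set (nb v)) (nb u)" using all by blast
  then have "\<forall>x\<in>set (nb u). x < 128 \<and> x \<noteq> u \<and> u \<in> set (nb x)" by (simp only: list_all_iff)
  moreover have "v \<in> set (nb u)" using assms by (simp only: GE_def)
  ultimately show ?thesis using u by (auto simp only: GE_def)
qed

lemma GE_sym: "GE u v \<Longrightarrow> GE v u" using GE_props[of u v] by simp

definition pR :: "(nat \<Rightarrow> real) \<Rightarrow> (nat \<Rightarrow> real) \<Rightarrow> nat \<Rightarrow> nat \<Rightarrow> bool" where
  "pR lo hi u v \<longleftrightarrow> lo v = hi u \<and> (\<forall>w. GE v w \<longrightarrow> w \<noteq> u \<longrightarrow> lo w = hi v)"
definition pL :: "(nat \<Rightarrow> real) \<Rightarrow> (nat \<Rightarrow> real) \<Rightarrow> nat \<Rightarrow> nat \<Rightarrow> bool" where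
  "pL lo hi u v \<longleftrightarrow> hi v = lo u \<and> (\<forall>w. GE v w \<longrightarrow> w \<noteq> u \<longrightarrow> hi w = lo v)"

definition good :: "(nat \<Rightarrow> real) \<Rightarrow> (nat \<Rightarrow> real) \<Rightarrow> bool" where
  "good lo hi \<longleftrightarrow> (\<forall>v<128. lo v < hi v) \<and>
     (\<forall>u v. GE u v \<longrightarrow> hi u = lo v \<or> hi v = lo u) \<and>
     (\<forall>u v1 v2 v3. GE u v1 \<longrightarrow> GE u v2 \<longrightarrow> GE u v3 \<longrightarrow> v1 \<noteq> v2 \<longrightarrow> v1 \<noteq> v3 \<longrightarrow> v2 \<noteq> v3 \<longrightarrow>
        lo v1 = hi u \<longrightarrow> lo v2 = hi u \<longrightarrow> lo v3 = hi u \<longrightarrow>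
        pR lo hi u v1 \<or> pR lo hi u v2 \<or> pR lo hi u v3) \<and>
     (\<forall>u v1 v2 v3. GE u v1 \<longrightarrow> GE u v2 \<longrightarrow> GE u v3 \<longrightarrow> v1 \<noteq> v2 \<longrightarrow> v1 \<noteq> v3 \<longrightarrow> v2 \<noteq> v3 \<longrightarrow>
        hi v1 = lo u \<longrightarrow> hi v2 = lo u \<longrightarrow> hi v3 = lo u \<longrightarrow>
        pL lo hi u v1 \<or> pL lo hi u v2 \<or> pL lo hi u v3)"

lemma pR_mirror: "pR (\<lambda>v. - hi v) (\<lambda>v. - lo v) u v = pL lo hi u v"
  unfolding pR_def pL_def by auto
lemma pL_mirror: "pL (\<lambda>v. - hi v) (\<lambda>v. - lo v) u v = pR lo hi u v"
  unfolding pR_def pL_def by auto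

lemma good_mirror: assumes "good lo hi" shows "good (\<lambda>v. - hi v) (\<lambda>v. - lo v)"
proof -
  note g = assms[unfolded good_def]
  have g1: "\<forall>v<128. lo v < hi v" using g[THEN conjunct1] .
  have g2: "\<forall>u v. GE u v \<longrightarrow> hi u = lo v \<or> hi v = lo u" using g[THEN conjunct2, THEN conjunct1] .
  have g3: "\<forall>u v1 v2 v3. GE u v1 \<longrightarrow> GE u v2 \<longrightarrow> GE u v3 \<longrightarrow> v1 \<noteq> v2 \<longrightarrow> v1 \<noteq> v3 \<longrightarrow> v2 \<noteq> v3 \<longrightarrow>
        lo v1 = hi u \<longrightarrow> lo v2 = hi u \<longrightarrow> lo v3 = hi u \<longrightarrow>
        pR lo hi u v1 \<or> pR lo hi u v2 \<or> pR lo hi u v3" using g[THEN conjunct2, THEN conjunct2, THEN conjunct1] .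
  have g4: "\<forall>u v1 v2 v3. GE u v1 \<longrightarrow> GE u v2 \<longrightarrow> GE u v3 \<longrightarrow> v1 \<noteq> v2 \<longrightarrow> v1 \<noteq> v3 \<longrightarrow> v2 \<noteq> v3 \<longrightarrow>
        hi v1 = lo u \<longrightarrow> hi v2 = lo u \<longrightarrow> hi v3 = lo u \<longrightarrow>
        pL lo hi u v1 \<or> pL lo hi u v2 \<or> pL lo hi u v3" using g[THEN conjunct2, THEN conjunct2, THEN conjunct2] .
  show ?thesis unfolding good_def pR_mirror pL_mirror neg_equal_iff_equal neg_less_iff_less
    apply (intro conjI)
    using g1 apply blast
    using g2 apply metis
    using g4 apply blast
    using g3 apply blast
    done
qed

lemma edges_blk: "list_all (\<lambda>i. GE (110+i) (119+i) \<and> list_all (\<lambda>j. GE (110+i) (12*i+4*j) \<and>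
   GE (12*i+4*j) (12*i+4*j+1) \<and> GE (12*i+4*j+1) (12*i+4*j+2) \<and> GE (12*i+4*j+2) (12*i+4*j+3) \<and>
   GE (12*i+4*j+3) (119+i)) [0..<3]) [0..<9]"
  unfolding GE_def by code_simp

lemma edges_blk': assumes i: "i < 9" and j: "j < 3"
  shows "GE (110+i) (119+i)" "GE (110+i) (12*i+4*j)" "GE (12*i+4*j) (12*i+4*j+1)"
    "GE (12*i+4*j+1) (12*i+4*j+2)" "GE (12*i+4*j+2) (12*i+4*j+3)" "GE (12*i+4*j+3) (119+i)"
proof -
  have 1: "\<forall>x\<in>{0..<9}. GE (110+x) (119+x) \<and> (\<forall>y\<in>{0..<3}. GE (110+x) (12*x+4*y) \<and>
   GE (12*x+4*y) (12*x+4*y+1) \<and> GE (12*x+4*y+1) (12*x+4*y+2) \<and> GE (12*x+4*y+2) (12*x+4*y+3) \<and>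
   GE (12*x+4*y+3) (119+x))" using edges_blk by (simp only: list_all_iff set_upt)
  have 2: "GE (110+i) (119+i) \<and> (\<forall>y\<in>{0..<3}. GE (110+i) (12*i+4*y) \<and>
   GE (12*i+4*y) (12*i+4*y+1) \<and> GE (12*i+4*y+1) (12*i+4*y+2) \<and> GE (12*i+4*y+2) (12*i+4*y+3) \<and>
   GE (12*i+4*y+3) (119+i))" using bspec[OF 1, of i] i by simp
  have 3: "GE (110+i) (12*i+4*j) \<and>
   GE (12*i+4*j) (12*i+4*j+1) \<and> GE (12*i+4*j+1) (12*i+4*j+2) \<and> GE (12*i+4*j+2) (12*i+4*j+3) \<and>
   GE (12*i+4*j+3) (119+i)" using 2 j by simp
  show "GE (110+i) (119+i)" using 2 by blast
  show "GE (110+i) (12*i+4*j)" "GE (12*i+4*j) (12*i+4*j+1)"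
    "GE (12*i+4*j+1) (12*i+4*j+2)" "GE (12*i+4*j+2) (12*i+4*j+3)" "GE (12*i+4*j+3) (119+i)"
    using 3 by blast+
qed

lemma half:
  assumes g: "good lo hi" and i: "i < 9"
    and pa: "pR lo hi 108 (110+i)" and pb: "pR lo hi 109 (119+i) \<or> pL lo hi 109 (119+i)"
  shows False
proof -
  define a where "a = 110 + i"
  define b where "b = 119 + i"
  define p where "p = (\<lambda>j k. 12*i+4*j+k)"
  note g' = g[unfolded good_def]
  have H1: "\<And>v. v < 128 \<Longrightarrow> lo v < hi v" using g'[THEN conjunct1] by blast
  have H2: "\<And>u v. GE u v \<Longrightarrow> hi u = lo v \<or> hi v = lo u" using g'[THEN conjunct2, THEN conjunct1] by blast
  have MidR: "\<And>u v1 v2 v3. GE u v1 \<Longrightarrow> GE u v2 \<Longrightarrow> GE u v3 \<Longrightarrow> v1 \<noteq> v2 \<Longrightarrow> v1 \<noteq> v3 \<Longrightarrow> v2 \<noteq> v3 \<Longrightarrow>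
        lo v1 = hi u \<Longrightarrow> lo v2 = hi u \<Longrightarrow> lo v3 = hi u \<Longrightarrow>
        pR lo hi u v1 \<or> pR lo hi u v2 \<or> pR lo hi u v3" using g'[THEN conjunct2, THEN conjunct2, THEN conjunct1] by blast
  have MidL: "\<And>u v1 v2 v3. GE u v1 \<Longrightarrow> GE u v2 \<Longrightarrow> GE u v3 \<Longrightarrow> v1 \<noteq> v2 \<Longrightarrow> v1 \<noteq> v3 \<Longrightarrow> v2 \<noteq> v3 \<Longrightarrow>
        hi v1 = lo u \<Longrightarrow> hi v2 = lo u \<Longrightarrow> hi v3 = lo u \<Longrightarrow>
        pL lo hi u v1 \<or> pL lo hi u v2 \<or> pL lo hi u v3" using g'[THEN conjunct2, THEN conjunct2, THEN conjunct2] by blast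
  have eab: "GE a b" using edges_blk'(1)[OF i, of 0] by (simp add: a_def b_def)
  have eap: "\<And>j. j < 3 \<Longrightarrow> GE a (p j 0)" using edges_blk'(2)[OF i] by (simp add: a_def p_def)
  have e01: "\<And>j. j < 3 \<Longrightarrow> GE (p j 0) (p j 1)" using edges_blk'(3)[OF i] by (simp add: p_def)
  have e12: "\<And>j. j < 3 \<Longrightarrow> GE (p j 1) (p j 2)" using edges_blk'(4)[OF i] by (simp add: p_def)
  have e23: "\<And>j. j < 3 \<Longrightarrow> GE (p j 2) (p j 3)" using edges_blk'(5)[OF i] by (simp add: p_def)
  have epb: "\<And>j. j < 3 \<Longrightarrow> GE (p j 3) b" using edges_blk'(6)[OF i] by (simp add: b_def p_def)
  have pbound: "\<And>j k. j < 3 \<Longrightarrow> k < 4 \<Longrightarrow> p j k < 108" using i by (simp add: p_def)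
  have pinj: "\<And>j j' k. j < 3 \<Longrightarrow> j' < 3 \<Longrightarrow> j \<noteq> j' \<Longrightarrow> p j k \<noteq> p j' k" by (simp add: p_def)
  have ab: "a < 128" "b < 128" "a \<ge> 108" "b \<ge> 108" "a \<noteq> 108" "b \<noteq> 108" "a \<noteq> 109" "b \<noteq> 109" "a \<noteq> b"
    using i by (simp_all add: a_def b_def)
  from pa have loa: "lo a = hi 108" and pa': "\<And>w. GE a w \<Longrightarrow> w \<noteq> 108 \<Longrightarrow> lo w = hi a"
    unfolding pR_def a_def by auto
  have lob: "lo b = hi a" using pa' eab ab by blast
  have pbL: "pL lo hi 109 b"
  proof -
    { assume "pR lo hi 109 b"
      then have "lo a = hi b" unfolding pR_def using GE_sym[OF eab] ab by blast
      with lob H1[of a] H1[of b] ab have False by linarith }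
    then show ?thesis using pb b_def by blast
  qed
  then have pb': "\<And>w. GE b w \<Longrightarrow> w \<noteq> 109 \<Longrightarrow> hi w = lo b" unfolding pL_def by auto
  have lp1: "\<And>j. j < 3 \<Longrightarrow> lo (p j 0) = hi a"
  proof -
    fix j :: nat assume j: "j < 3"
    have "p j 0 \<noteq> 108" using pbound[OF j, of 0] by simp
    then show "lo (p j 0) = hi a" using pa'[OF eap[OF j]] by simp
  qed
  have hp4: "\<And>j. j < 3 \<Longrightarrow> hi (p j 3) = lo b"
  proof -
    fix j :: nat assume j: "j < 3"
    have "p j 3 \<noteq> 109" using pbound[OF j, of 3] by simp
    then show "hi (p j 3) = lo b" using pb'[OF GE_sym[OF epb[OF j]]] by simp
  qed
  have npRab: "\<not> pR lo hi a b"
  proof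
    assume "pR lo hi a b"
    then have "lo (p 0 3) = hi b" unfolding pR_def using GE_sym[OF epb[of 0]] pbound[of 0 3] ab by force
    moreover have "hi (p 0 3) = lo b" using hp4[of 0] by simp
    ultimately show False using H1[of "p 0 3"] H1[of b] pbound[of 0 3] ab by force
  qed
  have npLba: "\<not> pL lo hi b a"
  proof
    assume "pL lo hi b a"
    then have "hi (p 0 0) = lo a" unfolding pL_def using eap[of 0] pbound[of 0 0] ab by force
    moreover have "lo (p 0 0) = hi a" using lp1[of 0] by simp
    ultimately show False using H1[of "p 0 0"] H1[of a] pbound[of 0 0] ab by force
  qed
  have A: "\<And>j k. j < 3 \<Longrightarrow> k < 3 \<Longrightarrow> j \<noteq> k \<Longrightarrow> pR lo hi a (p j 0) \<or> pR lo hi a (p k 0)"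
  proof -
    fix j k :: nat assume jk: "j < 3" "k < 3" "j \<noteq> k"
    have "pR lo hi a b \<or> pR lo hi a (p j 0) \<or> pR lo hi a (p k 0)"
      apply (rule MidR[OF eab eap[OF jk(1)] eap[OF jk(2)]])
      using pbound[of j 0] pbound[of k 0] ab jk pinj lob lp1 by auto
    then show "pR lo hi a (p j 0) \<or> pR lo hi a (p k 0)" using npRab by blast
  qed
  have B: "\<And>j k. j < 3 \<Longrightarrow> k < 3 \<Longrightarrow> j \<noteq> k \<Longrightarrow> pL lo hi b (p j 3) \<or> pL lo hi b (p k 3)"
  proof -
    fix j k :: nat assume jk: "j < 3" "k < 3" "j \<noteq> k"
    have "pL lo hi b a \<or> pL lo hi b (p j 3) \<or> pL lo hi b (p k 3)"
      apply (rule MidL[OF GE_sym[OF eab] GE_sym[OF epb[OF jk(1)]] GE_sym[OF epb[OF jk(2)]]])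
      using pbound[of j 3] pbound[of k 3] ab jk pinj lob hp4 by auto
    then show "pL lo hi b (p j 3) \<or> pL lo hi b (p k 3)" using npLba by blast
  qed
  obtain j where j: "j < 3" "pR lo hi a (p j 0)" "pL lo hi b (p j 3)"
  proof -
    have "\<exists>j<3. pR lo hi a (p j 0) \<and> pL lo hi b (p j 3)"
    proof -
      have a01: "pR lo hi a (p 0 0) \<or> pR lo hi a (p 1 0)" using A[of 0 1] by simp
      have a02: "pR lo hi a (p 0 0) \<or> pR lo hi a (p 2 0)" using A[of 0 2] by simp
      have a12: "pR lo hi a (p 1 0) \<or> pR lo hi a (p 2 0)" using A[of 1 2] by simp
      have b01: "pL lo hi b (p 0 3) \<or> pL lo hi b (p 1 3)" using B[of 0 1] by simp
      have b02: "pL lo hi b (p 0 3) \<or> pL lo hi b (p 2 3)" using B[of 0 2] by simp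
      have b12: "pL lo hi b (p 1 3) \<or> pL lo hi b (p 2 3)" using B[of 1 2] by simp
      have "(pR lo hi a (p 0 0) \<and> pL lo hi b (p 0 3)) \<or> (pR lo hi a (p 1 0) \<and> pL lo hi b (p 1 3))
          \<or> (pR lo hi a (p 2 0) \<and> pL lo hi b (p 2 3))"
        using a01 a02 a12 b01 b02 b12 by blast
      then show ?thesis
        apply (elim disjE)
        apply (rule exI[where x=0]; simp)
        apply (rule exI[where x=1]; simp)
        apply (rule exI[where x=2]; simp)
        done
    qed
    then show ?thesis using that by blast
  qed
  have x1: "lo (p j 1) = hi (p j 0)"
    using j(2) e01[OF j(1)] pbound[of j 1] ab j(1) unfolding pR_def by force
  have x2: "hi (p j 2) = lo (p j 3)"
    using j(3) GE_sym[OF e23[OF j(1)]] pbound[of j 2] ab j(1) unfolding pL_def by force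
  have x3: "hi (p j 1) = lo (p j 2) \<or> hi (p j 2) = lo (p j 1)" using H2[OF e12[OF j(1)]] .
  have h0: "\<And>k. k < 4 \<Longrightarrow> lo (p j k) < hi (p j k)"
  proof -
    fix k :: nat assume k: "k < 4"
    have "p j k < 128" using pbound[OF j(1) k] by simp
    then show "lo (p j k) < hi (p j k)" using H1 by blast
  qed
  have h: "lo (p j 0) < hi (p j 0)" "lo (p j 1) < hi (p j 1)" "lo (p j 2) < hi (p j 2)" "lo (p j 3) < hi (p j 3)"
    using h0[of 0] h0[of 1] h0[of 2] h0[of 3] by simp_all
  show False using x3
  proof
    assume "hi (p j 1) = lo (p j 2)"
    then show False using x1 x2 h lp1[OF j(1)] hp4[OF j(1)] lob by linarith
  next
    assume "hi (p j 2) = lo (p j 1)"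
    then show False using x1 x2 h lp1[OF j(1)] hp4[OF j(1)] lob by linarith
  qed
qed



lemma rect_coords:
  assumes "\<forall>v\<in>V. is_rect (R v)"
  obtains X1 X2 Y1 Y2 :: "'a \<Rightarrow> real" where
    "\<forall>v\<in>V. X1 v < X2 v \<and> Y1 v < Y2 v \<and> R v = {X1 v..X2 v} \<times> {Y1 v..Y2 v}"
proof -
  have "\<forall>v. \<exists>q::real\<times>real\<times>real\<times>real. v \<in> V \<longrightarrow>
      fst q < fst (snd q) \<and> fst (snd (snd q)) < snd (snd (snd q)) \<and>
      R v = {fst q..fst (snd q)} \<times> {fst (snd (snd q))..snd (snd (snd q))}"
  proof
    fix v show "\<exists>q::real\<times>real\<times>real\<times>real. v \<in> V \<longrightarrow>
      fst q < fst (snd q) \<and> fst (snd (snd q)) < snd (snd (snd q)) \<and>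
      R v = {fst q..fst (snd q)} \<times> {fst (snd (snd q))..snd (snd (snd q))}"
    proof (cases "v \<in> V")
      case True
      then obtain a b c d where "a < b" "c < d" "R v = {a..b} \<times> {c..d}"
        using assms unfolding is_rect_def by blast
      then show ?thesis by (intro exI[of _ "(a,b,c,d)"]) simp
    qed simp
  qed
  then obtain f :: "'a \<Rightarrow> real\<times>real\<times>real\<times>real" where f: "\<forall>v. v \<in> V \<longrightarrow>
      fst (f v) < fst (snd (f v)) \<and> fst (snd (snd (f v))) < snd (snd (snd (f v))) \<and>
      R v = {fst (f v)..fst (snd (f v))} \<times> {fst (snd (snd (f v)))..snd (snd (snd (f v)))}"
    by metis
  show thesis
    by (rule that[of "\<lambda>v. fst (f v)" "\<lambda>v. fst (snd (f v))" "\<lambda>v. fst (snd (snd (f v)))" "\<lambda>v. snd (snd (snd (f v)))"])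
      (use f in blast)
qed

lemma contact_rect:
  fixes a b c d a' b' c' d' x e f :: real
  assumes "a < b" "c < d" "a' < b'" "c' < d'" "e < f"
    and eq: "({a..b} \<times> {c..d}) \<inter> ({a'..b'} \<times> {c'..d'}) = {x} \<times> {e..f}"
  shows "(b = a' \<or> b' = a) \<and> max c c' < min d d'"
proof -
  have xe: "(x, e) \<in> ({a..b} \<times> {c..d}) \<inter> ({a'..b'} \<times> {c'..d'})" using eq assms(5) by auto
  have xf: "(x, f) \<in> ({a..b} \<times> {c..d}) \<inter> ({a'..b'} \<times> {c'..d'})" using eq assms(5) by auto
  have y: "max c c' < min d d'" using xe xf assms(5) by auto
  have "b = a' \<or> b' = a"
  proof (rule ccontr)
    assume ne: "\<not> (b = a' \<or> b' = a)"
    have bx: "a \<le> x" "x \<le> b" "a' \<le> x" "x \<le> b'" "c \<le> e" "e \<le> d" "c' \<le> e" "e \<le> d'" using xe by auto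
    have lt: "max a a' < min b b'" using bx ne assms by auto
    have "(max a a', e) \<in> ({a..b} \<times> {c..d}) \<inter> ({a'..b'} \<times> {c'..d'})" using bx lt by auto
    then have "max a a' = x" using eq by auto
    moreover have "(min b b', e) \<in> ({a..b} \<times> {c..d}) \<inter> ({a'..b'} \<times> {c'..d'})" using bx lt by auto
    then have "min b b' = x" using eq by auto
    ultimately show False using lt by simp
  qed
  then show ?thesis using y by blast
qed

lemma overlap_interior:
  fixes a b c d a' b' c' d' :: real
  assumes "max a a' < min b b'" "max c c' < min d d'"
  shows "interior ({a..b} \<times> {c..d}) \<inter> interior ({a'..b'} \<times> {c'..d'}) \<noteq> {}"
proof -
  let ?p = "((max a a' + min b b') / 2, (max c c' + min d d') / 2)"
  have "?p \<in> interior ({a..b} \<times> {c..d}) \<inter> interior ({a'..b'} \<times> {c'..d'})"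
    using assms by (auto simp: interior_Times max_def min_def)
  then show ?thesis by blast
qed

lemma cbu_good:
  assumes "in_2CBU {..<(128::nat)} GE"
  shows "\<exists>lo hi. good lo hi"
proof -
  obtain R where R1: "\<forall>v \<in> {..<(128::nat)}. is_rect (R v)"
    and R2: "\<forall>u \<in> {..<128}. \<forall>v \<in> {..<128}. u \<noteq> v \<longrightarrow> interior (R u) \<inter> interior (R v) = {}"
    and R3: "\<forall>u \<in> {..<128}. \<forall>v \<in> {..<128}. u \<noteq> v \<longrightarrow> (GE u v \<longleftrightarrow> R u \<inter> R v \<noteq> {})"
    and R4: "\<forall>u \<in> {..<128}. \<forall>v \<in> {..<128}. u \<noteq> v \<and> R u \<inter> R v \<noteq> {} \<longrightarrow>
        (\<exists>x c d. c < d \<and> R u \<inter> R v = {x} \<times> {c..d})"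
    using assms unfolding in_2CBU_def by blast
  obtain X1 X2 Y1 Y2 where XY: "\<forall>v\<in>{..<(128::nat)}. X1 v < X2 v \<and> Y1 v < Y2 v \<and> R v = {X1 v..X2 v} \<times> {Y1 v..Y2 v}"
    using rect_coords[OF R1] by blast
  have X: "\<And>v. v < 128 \<Longrightarrow> X1 v < X2 v" and Y: "\<And>v. v < 128 \<Longrightarrow> Y1 v < Y2 v"
    and Rv: "\<And>v. v < 128 \<Longrightarrow> R v = {X1 v..X2 v} \<times> {Y1 v..Y2 v}" using XY by auto
  have cont: "(X2 u = X1 v \<or> X2 v = X1 u) \<and> max (Y1 u) (Y1 v) < min (Y2 u) (Y2 v)" if "GE u v" for u v
  proof -
    have uv: "u < 128" "v < 128" "u \<noteq> v" using GE_props[OF that] by auto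
    have "R u \<inter> R v \<noteq> {}" using R3 uv that by auto
    then obtain x c d where "c < d" "R u \<inter> R v = {x} \<times> {c..d}" using R4 uv by blast
    then show ?thesis using contact_rect[of "X1 u" "X2 u" "Y1 u" "Y2 u" "X1 v" "X2 v" "Y1 v" "Y2 v" c d x]
      X[OF uv(1)] X[OF uv(2)] Y[OF uv(1)] Y[OF uv(2)] Rv[OF uv(1)] Rv[OF uv(2)] by auto
  qed
  have disj: "\<not> (max (X1 u) (X1 v) < min (X2 u) (X2 v) \<and> max (Y1 u) (Y1 v) < min (Y2 u) (Y2 v))"
    if "u < 128" "v < 128" "u \<noteq> v" for u v
    using overlap_interior[of "X1 u" "X1 v" "X2 u" "X2 v" "Y1 u" "Y1 v" "Y2 u" "Y2 v"] R2 that Rv by auto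
  have sep: "Y2 p \<le> Y1 q \<or> Y2 q \<le> Y1 p" if "p < 128" "q < 128" "p \<noteq> q" "max (X1 p) (X1 q) < min (X2 p) (X2 q)" for p q
    using disj[OF that(1-3)] that(4) Y[OF that(1)] Y[OF that(2)] by (auto simp: max_def min_def split: if_splits)
  have midR: "pR X1 X2 u m" if "GE u l" "GE u m" "GE u h" "X1 m = X2 u" "Y2 l \<le> Y1 m" "Y2 m \<le> Y1 h" for u l m h
    unfolding pR_def
  proof (intro conjI allI impI)
    show "X1 m = X2 u" by fact
    fix w assume mw: "GE m w" "w \<noteq> u"
    show "X1 w = X2 m"
    proof (rule ccontr)
      assume ne: "X1 w \<noteq> X2 m"
      have c1: "X2 w = X1 m" and c2: "max (Y1 m) (Y1 w) < min (Y2 m) (Y2 w)" using cont[OF mw(1)] ne by auto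
      have c3: "max (Y1 u) (Y1 l) < min (Y2 u) (Y2 l)" using cont[OF that(1)] by auto
      have c4: "max (Y1 u) (Y1 h) < min (Y2 u) (Y2 h)" using cont[OF that(3)] by auto
      have b: "u < 128" "w < 128" using GE_props[OF that(1)] GE_props[OF mw(1)] by auto
      have "X1 u < X2 u" "X1 w < X2 w" using X b by auto
      then show False using disj[OF b mw(2)[symmetric]] c1 c2 c3 c4 that(4-6)
        by (auto simp: max_def min_def split: if_splits)
    qed
  qed
  have midL: "pL X1 X2 u m" if "GE u l" "GE u m" "GE u h" "X2 m = X1 u" "Y2 l \<le> Y1 m" "Y2 m \<le> Y1 h" for u l m h
    unfolding pL_def
  proof (intro conjI allI impI)
    show "X2 m = X1 u" by fact
    fix w assume mw: "GE m w" "w \<noteq> u"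
    show "X2 w = X1 m"
    proof (rule ccontr)
      assume ne: "X2 w \<noteq> X1 m"
      have c1: "X1 w = X2 m" and c2: "max (Y1 m) (Y1 w) < min (Y2 m) (Y2 w)" using cont[OF mw(1)] ne by auto
      have c3: "max (Y1 u) (Y1 l) < min (Y2 u) (Y2 l)" using cont[OF that(1)] by auto
      have c4: "max (Y1 u) (Y1 h) < min (Y2 u) (Y2 h)" using cont[OF that(3)] by auto
      have b: "u < 128" "w < 128" using GE_props[OF that(1)] GE_props[OF mw(1)] by auto
      have "X1 u < X2 u" "X1 w < X2 w" using X b by auto
      then show False using disj[OF b mw(2)[symmetric]] c1 c2 c3 c4 that(4-6)
        by (auto simp: max_def min_def split: if_splits)
    qed
  qed
  have three: "(Y2 p \<le> Y1 q \<and> Y2 q \<le> Y1 r) \<or> (Y2 r \<le> Y1 q \<and> Y2 q \<le> Y1 p) \<or>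
      (Y2 q \<le> Y1 p \<and> Y2 p \<le> Y1 r) \<or> (Y2 r \<le> Y1 p \<and> Y2 p \<le> Y1 q) \<or>
      (Y2 p \<le> Y1 r \<and> Y2 r \<le> Y1 q) \<or> (Y2 q \<le> Y1 r \<and> Y2 r \<le> Y1 p)"
    if "Y2 p \<le> Y1 q \<or> Y2 q \<le> Y1 p" "Y2 p \<le> Y1 r \<or> Y2 r \<le> Y1 p" "Y2 q \<le> Y1 r \<or> Y2 r \<le> Y1 q"
       "Y1 p < Y2 p" "Y1 q < Y2 q" "Y1 r < Y2 r" for p q r
    using that by linarith
  have good: "good X1 X2" unfolding good_def
  proof (intro conjI allI impI)
    show "X1 v < X2 v" if "v < 128" for v using X that .
  next
    fix u v assume "GE u v" then show "X2 u = X1 v \<or> X2 v = X1 u" using cont by blast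
  next
    fix u v1 v2 v3 assume a: "GE u v1" "GE u v2" "GE u v3" "v1 \<noteq> v2" "v1 \<noteq> v3" "v2 \<noteq> v3"
      "X1 v1 = X2 u" "X1 v2 = X2 u" "X1 v3 = X2 u"
    have b: "v1 < 128" "v2 < 128" "v3 < 128" using GE_props a(1-3) by auto
    have s: "Y2 p \<le> Y1 q \<or> Y2 q \<le> Y1 p" if "p \<in> {v1,v2,v3}" "q \<in> {v1,v2,v3}" "p \<noteq> q" for p q
    proof (rule sep)
      show "p < 128" "q < 128" "p \<noteq> q" using that b by auto
      show "max (X1 p) (X1 q) < min (X2 p) (X2 q)" using that a X[OF b(1)] X[OF b(2)] X[OF b(3)] by (auto simp: max_def min_def)
    qed
    have "Y1 v1 < Y2 v1" "Y1 v2 < Y2 v2" "Y1 v3 < Y2 v3" using Y b by auto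
    with three[OF s[of v1 v2] s[of v1 v3] s[of v2 v3]] a(4-6)
    show "pR X1 X2 u v1 \<or> pR X1 X2 u v2 \<or> pR X1 X2 u v3"
      using midR[OF a(1) a(2) a(3) a(8)] midR[OF a(3) a(2) a(1) a(8)]
        midR[OF a(2) a(1) a(3) a(7)] midR[OF a(3) a(1) a(2) a(7)]
        midR[OF a(1) a(3) a(2) a(9)] midR[OF a(2) a(3) a(1) a(9)] by auto
  next
    fix u v1 v2 v3 assume a: "GE u v1" "GE u v2" "GE u v3" "v1 \<noteq> v2" "v1 \<noteq> v3" "v2 \<noteq> v3"
      "X2 v1 = X1 u" "X2 v2 = X1 u" "X2 v3 = X1 u"
    have b: "v1 < 128" "v2 < 128" "v3 < 128" using GE_props a(1-3) by auto
    have s: "Y2 p \<le> Y1 q \<or> Y2 q \<le> Y1 p" if "p \<in> {v1,v2,v3}" "q \<in> {v1,v2,v3}" "p \<noteq> q" for p q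
    proof (rule sep)
      show "p < 128" "q < 128" "p \<noteq> q" using that b by auto
      show "max (X1 p) (X1 q) < min (X2 p) (X2 q)" using that a X[OF b(1)] X[OF b(2)] X[OF b(3)] by (auto simp: max_def min_def)
    qed
    have "Y1 v1 < Y2 v1" "Y1 v2 < Y2 v2" "Y1 v3 < Y2 v3" using Y b by auto
    with three[OF s[of v1 v2] s[of v1 v3] s[of v2 v3]] a(4-6)
    show "pL X1 X2 u v1 \<or> pL X1 X2 u v2 \<or> pL X1 X2 u v3"
      using midL[OF a(1) a(2) a(3) a(8)] midL[OF a(3) a(2) a(1) a(8)]
        midL[OF a(2) a(1) a(3) a(7)] midL[OF a(3) a(1) a(2) a(7)]
        midL[OF a(1) a(3) a(2) a(9)] midL[OF a(2) a(3) a(1) a(9)] by auto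
  qed
  then show ?thesis by blast
qed



definition blk :: "nat \<Rightarrow> nat" where
  "blk v = (if v < 108 then v div 12 else if v < 110 then 100 else if v < 119 then v - 110 else v - 119)"

lemma F4: "list_all (\<lambda>u. list_all (\<lambda>v. u = 108 \<or> u = 109 \<or> v = 108 \<or> v = 109 \<or> blk u = blk v) (nb u)) [0..<128]"
  unfolding blk_def by code_simp

lemma F5: "list_all (\<lambda>u. list_all (\<lambda>v. v < 108 \<longrightarrow> v div 4 = u div 4 \<and> (v = Suc u \<or> u = Suc v)) (nb u)) [0..<108]"
  by code_simp

lemma la_upt: "list_all P [0..<n] \<Longrightarrow> x < n \<Longrightarrow> P x" by (simp add: list_all_iff)
lemma la_mem: "list_all P xs \<Longrightarrow> v \<in> set xs \<Longrightarrow> P v" by (simp add: list_all_iff)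

lemma GE_blk: assumes "GE u v" "u \<noteq> 108" "u \<noteq> 109" "v \<noteq> 108" "v \<noteq> 109" shows "blk u = blk v"
proof -
  have u: "u < 128" using GE_props[OF assms(1)] by simp
  have v: "v \<in> set (nb u)" using assms(1) by (simp only: GE_def)
  have "u = 108 \<or> u = 109 \<or> v = 108 \<or> v = 109 \<or> blk u = blk v" using la_mem[OF la_upt[OF F4 u] v] .
  then show ?thesis using assms by blast
qed

lemma GE_inner: assumes "GE u v" "u < 108" "v < 108" shows "v div 4 = u div 4 \<and> (v = Suc u \<or> u = Suc v)"
proof -
  have v: "v \<in> set (nb u)" using assms(1) by (simp only: GE_def)
  show ?thesis using la_mem[OF la_upt[OF F5 assms(2)] v] assms(3) by blast
qed

lemma GE_inner_nb: assumes "GE u w" "u < 108" shows "w = lft u \<or> w = rgt u"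
  using assms by (simp add: GE_def nb_def)

lemma GE_108: "GE 108 v \<Longrightarrow> 110 \<le> v \<and> v < 119" by (auto simp: GE_def nb_def)
lemma GE_109: "GE 109 v \<Longrightarrow> 119 \<le> v \<and> v < 128" by (auto simp: GE_def nb_def)

lemma crossing:
  assumes "GE u v" "v \<noteq> 108" "v \<noteq> 109" "u = 108 \<or> u = 109 \<or> blk u \<noteq> blk v"
  shows "(u = 108 \<and> v = 110 + blk v) \<or> (u = 109 \<and> v = 119 + blk v)"
proof -
  have "u = 108 \<or> u = 109" using GE_blk[OF assms(1)] assms by blast
  then show ?thesis
  proof
    assume u: "u = 108"
    then have "110 \<le> v \<and> v < 119" using GE_108 assms(1) by simp
    then show ?thesis using u by (simp add: blk_def)
  next
    assume u: "u = 109"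
    then have "119 \<le> v \<and> v < 128" using GE_109 assms(1) by simp
    then show ?thesis using u by (simp add: blk_def)
  qed
qed

definition adj :: "nat set \<Rightarrow> nat set \<Rightarrow> bool" where
  "adj C D \<longleftrightarrow> (\<exists>u\<in>C. \<exists>v\<in>D. GE u v)"

lemma conn_path:
  assumes "connected_set GE C" "x \<in> C" "y \<in> C"
  shows "(\<lambda>a b. GE a b \<and> a \<in> C \<and> b \<in> C)\<^sup>*\<^sup>* x y"
  using assms unfolding connected_set_def by blast

lemma blk_const:
  assumes c: "connected_set GE C" and st: "108 \<notin> C" "109 \<notin> C" and xy: "x \<in> C" "y \<in> C"
  shows "blk x = blk y"
proof -
  have "(\<lambda>a b. GE a b \<and> a \<in> C \<and> b \<in> C)\<^sup>*\<^sup>* x y" using conn_path[OF c xy] .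
  then show ?thesis
  proof (induction rule: rtranclp_induct)
    case base then show ?case by simp
  next
    case (step y z)
    then have "blk y = blk z" using GE_blk[of y z] st by auto
    then show ?case using step by simp
  qed
qed

lemma interval:
  assumes c: "connected_set GE C" and sub: "\<forall>c\<in>C. c < 108" and xy: "x \<in> C" "y \<in> C"
  shows "x div 4 = y div 4 \<and> (\<forall>z. min x y \<le> z \<and> z \<le> max x y \<longrightarrow> z \<in> C)"
proof -
  have "(\<lambda>a b. GE a b \<and> a \<in> C \<and> b \<in> C)\<^sup>*\<^sup>* x y" using conn_path[OF c xy] .
  then show ?thesis
  proof (induction rule: rtranclp_induct)
    case base
    have "\<forall>z. x \<le> z \<and> z \<le> x \<longrightarrow> z \<in> C" using xy(1) by (metis le_antisym)
    then show ?case by simp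
  next
    case (step y z)
    have yz: "z div 4 = y div 4 \<and> (z = Suc y \<or> y = Suc z)" using GE_inner[of y z] step sub by auto
    show ?case
    proof (intro conjI allI impI)
      show "x div 4 = z div 4" using step yz by simp
      fix w assume w: "min x z \<le> w \<and> w \<le> max x z"
      show "w \<in> C"
      proof (cases "w = z")
        case True then show ?thesis using step by simp
      next
        case False
        then have "min x y \<le> w \<and> w \<le> max x y" using w yz
          unfolding min_def max_def by (simp split: if_splits; arith)
        then show ?thesis using step by blast
      qed
    qed
  qed
qed

lemma exit_lft:
  assumes c: "connected_set GE C" and sub: "\<forall>c\<in>C. c < 108"
    and u: "u \<in> C" "u' \<in> C" and w: "lft u \<notin> C" "lft u' \<notin> C"
  shows "u = u'"
proof (rule ccontr)
  assume ne: "u \<noteq> u'"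
  { fix p q assume pq: "p \<in> C" "q \<in> C" "p < q" "lft q \<notin> C"
    have I: "p div 4 = q div 4 \<and> (\<forall>z. min p q \<le> z \<and> z \<le> max p q \<longrightarrow> z \<in> C)"
      using interval[OF c sub pq(1) pq(2)] .
    have d: "p div 4 = q div 4" using I by blast
    have "q mod 4 \<noteq> 0" using d pq(3) div_mult_mod_eq[of p 4] div_mult_mod_eq[of q 4] by linarith
    then have "lft q = q - 1" by (simp add: lft_def)
    moreover have "q - 1 \<in> C" using I pq(3) by auto
    ultimately have False using pq(4) by simp }
  moreover have "u < u' \<or> u' < u" using ne by arith
  ultimately show False using u w by blast
qed

lemma exit_rgt:
  assumes c: "connected_set GE C" and sub: "\<forall>c\<in>C. c < 108"
    and u: "u \<in> C" "u' \<in> C" and w: "rgt u \<notin> C" "rgt u' \<notin> C"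
  shows "u = u'"
proof (rule ccontr)
  assume ne: "u \<noteq> u'"
  { fix p q assume pq: "p \<in> C" "q \<in> C" "p < q" "rgt p \<notin> C"
    have I: "p div 4 = q div 4 \<and> (\<forall>z. min p q \<le> z \<and> z \<le> max p q \<longrightarrow> z \<in> C)"
      using interval[OF c sub pq(1) pq(2)] .
    have d: "p div 4 = q div 4" using I by blast
    have "p mod 4 \<noteq> 3" using d pq(3) div_mult_mod_eq[of p 4] div_mult_mod_eq[of q 4] mod_less_divisor[of 4 q] by linarith
    then have "rgt p = p + 1" by (simp add: rgt_def)
    moreover have "p + 1 \<in> C" using I pq(3) by auto
    ultimately have False using pq(4) by simp }
  moreover have "u < u' \<or> u' < u" using ne by arith
  ultimately show False using u w by blast
qed

lemma small_set:
  assumes c: "connected_set GE C" and sub: "\<forall>c\<in>C. c < 108"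
    and u: "u1 \<in> C" "u2 \<in> C" "u3 \<in> C" and e: "GE u1 w1" "GE u2 w2" "GE u3 w3"
    and w: "w1 \<notin> C" "w2 \<notin> C" "w3 \<notin> C" "w1 \<noteq> w2" "w1 \<noteq> w3" "w2 \<noteq> w3"
  shows False
proof -
  have t1: "w1 = lft u1 \<or> w1 = rgt u1" using GE_inner_nb[OF e(1)] sub u(1) by blast
  have t2: "w2 = lft u2 \<or> w2 = rgt u2" using GE_inner_nb[OF e(2)] sub u(2) by blast
  have t3: "w3 = lft u3 \<or> w3 = rgt u3" using GE_inner_nb[OF e(3)] sub u(3) by blast
  have L: "\<And>x y. x \<in> C \<Longrightarrow> y \<in> C \<Longrightarrow> lft x \<notin> C \<Longrightarrow> lft y \<notin> C \<Longrightarrow> x = y"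
    using exit_lft[OF c sub] by blast
  have R: "\<And>x y. x \<in> C \<Longrightarrow> y \<in> C \<Longrightarrow> rgt x \<notin> C \<Longrightarrow> rgt y \<notin> C \<Longrightarrow> x = y"
    using exit_rgt[OF c sub] by blast
  have PL: "False" if "a \<in> C" "b \<in> C" "wa \<notin> C" "wb \<notin> C" "wa \<noteq> wb" "wa = lft a" "wb = lft b" for a b wa wb
  proof -
    have "a = b" using L that by simp
    then show False using that by simp
  qed
  have PR: "False" if "a \<in> C" "b \<in> C" "wa \<notin> C" "wb \<notin> C" "wa \<noteq> wb" "wa = rgt a" "wb = rgt b" for a b wa wb
  proof -
    have "a = b" using R that by simp
    then show False using that by simp
  qed
  show False
    using t1 t2 t3 PL[OF u(1) u(2) w(1) w(2) w(4)] PL[OF u(1) u(3) w(1) w(3) w(5)] PL[OF u(2) u(3) w(2) w(3) w(6)]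
      PR[OF u(1) u(2) w(1) w(2) w(4)] PR[OF u(1) u(3) w(1) w(3) w(5)] PR[OF u(2) u(3) w(2) w(3) w(6)]
    by blast
qed

lemma hasbig:
  assumes c: "connected_set GE C"
    and d: "D1 \<inter> C = {}" "D2 \<inter> C = {}" "D3 \<inter> C = {}" "D1 \<inter> D2 = {}" "D1 \<inter> D3 = {}" "D2 \<inter> D3 = {}"
    and a: "\<exists>u\<in>C. \<exists>v\<in>D1. GE u v" "\<exists>u\<in>C. \<exists>v\<in>D2. GE u v" "\<exists>u\<in>C. \<exists>v\<in>D3. GE u v"
  shows "\<exists>c\<in>C. 108 \<le> c"
proof (rule ccontr)
  assume "\<not> (\<exists>c\<in>C. 108 \<le> c)"
  then have sub: "\<forall>c\<in>C. c < 108" by auto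
  obtain u1 w1 where 1: "u1 \<in> C" "w1 \<in> D1" "GE u1 w1" using a(1) by blast
  obtain u2 w2 where 2: "u2 \<in> C" "w2 \<in> D2" "GE u2 w2" using a(2) by blast
  obtain u3 w3 where 3: "u3 \<in> C" "w3 \<in> D3" "GE u3 w3" using a(3) by blast
  show False
    apply (rule small_set[OF c sub 1(1) 2(1) 3(1) 1(3) 2(3) 3(3)])
    using 1 2 3 d by blast+
qed

lemma away:
  assumes c: "connected_set GE S" and s: "108 \<in> S" "109 \<notin> S" "110 + i \<notin> S" "119 + i \<notin> S"
  shows "\<forall>x\<in>S. \<not> (x \<noteq> 108 \<and> x \<noteq> 109 \<and> blk x = i)"
proof
  fix x assume x: "x \<in> S"
  have "(\<lambda>a b. GE a b \<and> a \<in> S \<and> b \<in> S)\<^sup>*\<^sup>* 108 x" using conn_path[OF c s(1) x] .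
  then show "\<not> (x \<noteq> 108 \<and> x \<noteq> 109 \<and> blk x = i)"
  proof (induction rule: rtranclp_induct)
    case base then show ?case by simp
  next
    case (step y z)
    show ?case
    proof
      assume z: "z \<noteq> 108 \<and> z \<noteq> 109 \<and> blk z = i"
      have "y = 108 \<or> y = 109 \<or> blk y \<noteq> blk z" using step.IH z by auto
      then have "(y = 108 \<and> z = 110 + blk z) \<or> (y = 109 \<and> z = 119 + blk z)"
        using crossing[of y z] step.hyps(2) z by blast
      then show False using step.hyps(2) s z by auto
    qed
  qed
qed

lemma core:
  fixes B :: "nat \<Rightarrow> nat set"
  assumes M1: "\<forall>i<4. B i \<subseteq> {..<128} \<and> connected_set GE (B i)"
    and M2: "\<forall>i<4. \<forall>j<4. i \<noteq> j \<longrightarrow> B i \<inter> B j = {} \<and> (\<exists>u\<in>B i. \<exists>v\<in>B j. GE u v)"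
    and k: "k2 < 4" "k3 < 4" "k2 \<noteq> k3" "108 \<notin> B k2" "109 \<notin> B k2" "108 \<notin> B k3" "109 \<notin> B k3"
  shows False
proof -
  have conn: "\<And>m. m < 4 \<Longrightarrow> connected_set GE (B m)" using M1 by blast
  have sub: "\<And>m. m < 4 \<Longrightarrow> B m \<subseteq> {..<128}" using M1 by blast
  have dj: "\<And>m m'. m < 4 \<Longrightarrow> m' < 4 \<Longrightarrow> m \<noteq> m' \<Longrightarrow> B m \<inter> B m' = {}" using M2 by blast
  have ad: "\<And>m m'. m < 4 \<Longrightarrow> m' < 4 \<Longrightarrow> m \<noteq> m' \<Longrightarrow> \<exists>u\<in>B m. \<exists>v\<in>B m'. GE u v" using M2 by blast
  have big: "\<exists>c\<in>B m. 108 \<le> c" if m: "m < 4" for m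
  proof -
    have "\<exists>x y z. x < 4 \<and> y < 4 \<and> z < 4 \<and> x \<noteq> m \<and> y \<noteq> m \<and> z \<noteq> m \<and> x \<noteq> y \<and> x \<noteq> z \<and> y \<noteq> z"
      using m by presburger
    then obtain x y z where xyz: "x < 4" "y < 4" "z < 4" "x \<noteq> m" "y \<noteq> m" "z \<noteq> m" "x \<noteq> y" "x \<noteq> z" "y \<noteq> z"
      by blast
    show ?thesis
      apply (rule hasbig[OF conn[OF m], of "B x" "B y" "B z"])
      using dj[of x m] dj[of y m] dj[of z m] dj[of x y] dj[of x z] dj[of y z]
        ad[of m x] ad[of m y] ad[of m z] xyz m by auto
  qed
  have blockof: "\<exists>i. \<forall>c\<in>B m. c \<noteq> 108 \<and> c \<noteq> 109 \<and> blk c = i"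
    if m: "m < 4" "108 \<notin> B m" "109 \<notin> B m" for m
  proof -
    obtain c0 where "c0 \<in> B m" using conn[OF m(1)] unfolding connected_set_def by blast
    then show ?thesis using blk_const[OF conn[OF m(1)] m(2) m(3)] m by metis
  qed
  have sameblk: "i = i'" if h: "m < 4" "m' < 4" "m \<noteq> m'"
    "\<forall>c\<in>B m. c \<noteq> 108 \<and> c \<noteq> 109 \<and> blk c = i" "\<forall>c\<in>B m'. c \<noteq> 108 \<and> c \<noteq> 109 \<and> blk c = i'" for m m' i i'
  proof -
    obtain u v where "u \<in> B m" "v \<in> B m'" "GE u v" using ad h(1-3) by blast
    then show ?thesis using GE_blk[of u v] h(4,5) by force
  qed
  have bigblk: "c = 110 + i \<or> c = 119 + i" if "c \<in> B m" "m < 4" "108 \<le> c" "c \<noteq> 108" "c \<noteq> 109" "blk c = i" for c m i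
  proof -
    have "c < 128" using sub[OF that(2)] that(1) by auto
    then show ?thesis using that(3-6) by (auto simp: blk_def split: if_splits)
  qed
  obtain i where i2: "\<forall>c\<in>B k2. c \<noteq> 108 \<and> c \<noteq> 109 \<and> blk c = i" using blockof k by blast
  obtain i' where i3: "\<forall>c\<in>B k3. c \<noteq> 108 \<and> c \<noteq> 109 \<and> blk c = i'" using blockof k by blast
  have ii: "i' = i" using sameblk[OF k(2) k(1) k(3)[symmetric] i3 i2] .
  obtain c2 where c2: "c2 \<in> B k2" "108 \<le> c2" using big k by blast
  obtain c3 where c3: "c3 \<in> B k3" "108 \<le> c3" using big k by blast
  have c2': "c2 = 110 + i \<or> c2 = 119 + i" using bigblk[OF c2(1) k(1) c2(2)] i2 c2 by blast
  have c3': "c3 = 110 + i \<or> c3 = 119 + i" using bigblk[OF c3(1) k(2) c3(2)] i3 c3 ii by blast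
  have c23: "c2 \<noteq> c3" using dj[OF k(1) k(2) k(3)] c2 c3 by blast
  have both: "110 + i \<in> B k2 \<union> B k3" "119 + i \<in> B k2 \<union> B k3" using c2 c3 c2' c3' c23 by auto
  have other: "108 \<in> B m \<or> 109 \<in> B m" if m: "m < 4" "m \<noteq> k2" "m \<noteq> k3" for m
  proof (rule ccontr)
    assume "\<not> (108 \<in> B m \<or> 109 \<in> B m)"
    then obtain i'' where im: "\<forall>c\<in>B m. c \<noteq> 108 \<and> c \<noteq> 109 \<and> blk c = i''" using blockof m by blast
    have "i'' = i" using sameblk[OF m(1) k(1) m(2) im i2] .
    obtain cm where cm: "cm \<in> B m" "108 \<le> cm" using big m by blast
    have "cm = 110 + i \<or> cm = 119 + i" using bigblk[OF cm(1) m(1) cm(2)] im cm \<open>i'' = i\<close> by blast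
    then have "cm \<in> B k2 \<union> B k3" using both by auto
    then show False using dj[OF m(1) k(1) m(2)] dj[OF m(1) k(2) m(3)] cm(1) by blast
  qed
  have "\<exists>m0 m1. m0 < 4 \<and> m1 < 4 \<and> m0 \<noteq> m1 \<and> m0 \<noteq> k2 \<and> m0 \<noteq> k3 \<and> m1 \<noteq> k2 \<and> m1 \<noteq> k3"
    using k(1-3) by presburger
  then obtain m0 m1 where mm: "m0 < 4" "m1 < 4" "m0 \<noteq> m1" "m0 \<noteq> k2" "m0 \<noteq> k3" "m1 \<noteq> k2" "m1 \<noteq> k3"
    by blast
  have o0: "108 \<in> B m0 \<or> 109 \<in> B m0" using other mm by blast
  have o1: "108 \<in> B m1 \<or> 109 \<in> B m1" using other mm by blast
  have d01: "B m0 \<inter> B m1 = {}" using dj mm by blast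
  have "\<exists>ms. ms < 4 \<and> ms \<noteq> k2 \<and> ms \<noteq> k3 \<and> 108 \<in> B ms \<and> 109 \<notin> B ms"
    using o0 o1 d01 mm by blast
  then obtain ms where ms: "ms < 4" "ms \<noteq> k2" "ms \<noteq> k3" "108 \<in> B ms" "109 \<notin> B ms" by blast
  have ns: "110 + i \<notin> B ms" "119 + i \<notin> B ms"
    using both dj[OF ms(1) k(1) ms(2)] dj[OF ms(1) k(2) ms(3)] by blast+
  have aw: "\<forall>x\<in>B ms. \<not> (x \<noteq> 108 \<and> x \<noteq> 109 \<and> blk x = i)"
    using away[OF conn[OF ms(1)] ms(4) ms(5) ns] .
  have into: "110 + i \<in> B k" if kk: "k < 4" "k \<noteq> ms" "\<forall>c\<in>B k. c \<noteq> 108 \<and> c \<noteq> 109 \<and> blk c = i" for k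
  proof -
    obtain u v where uv: "u \<in> B ms" "v \<in> B k" "GE u v" using ad[OF ms(1) kk(1) kk(2)[symmetric]] by blast
    have v: "v \<noteq> 108" "v \<noteq> 109" "blk v = i" using kk(3) uv(2) by auto
    have "u = 108 \<or> u = 109 \<or> blk u \<noteq> blk v" using aw uv(1) v by auto
    then have "(u = 108 \<and> v = 110 + blk v) \<or> (u = 109 \<and> v = 119 + blk v)"
      using crossing[OF uv(3) v(1) v(2)] by blast
    then show ?thesis using uv ms(5) v by auto
  qed
  have "110 + i \<in> B k2" using into[OF k(1) ms(2)[symmetric] i2] .
  moreover have "110 + i \<in> B k3" using into[OF k(2) ms(3)[symmetric]] i3 ii by blast
  ultimately show False using dj[OF k(1) k(2) k(3)] by blast
qed

lemma noK4: "\<not> has_K4_minor {..<128} GE"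
proof
  assume "has_K4_minor {..<128} GE"
  then obtain B :: "nat \<Rightarrow> nat set" where
    M1: "\<forall>i<4. B i \<subseteq> {..<128} \<and> connected_set GE (B i)"
    and M2: "\<forall>i<4. \<forall>j<4. i \<noteq> j \<longrightarrow> B i \<inter> B j = {} \<and> (\<exists>u\<in>B i. \<exists>v\<in>B j. GE u v)"
    unfolding has_K4_minor_def by blast
  have d: "\<And>i j x. i < 4 \<Longrightarrow> j < 4 \<Longrightarrow> i \<noteq> j \<Longrightarrow> x \<in> B i \<Longrightarrow> x \<notin> B j" using M2 by blast
  have n: "\<And>i j. i < 4 \<Longrightarrow> j < 4 \<Longrightarrow> i \<noteq> j \<Longrightarrow> \<not> (108 \<in> B i \<and> 108 \<in> B j) \<and> \<not> (109 \<in> B i \<and> 109 \<in> B j)"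
    using d by blast
  have n01: "\<not> (108 \<in> B 0 \<and> 108 \<in> B 1) \<and> \<not> (109 \<in> B 0 \<and> 109 \<in> B 1)" using n[of 0 1] by simp
  have n02: "\<not> (108 \<in> B 0 \<and> 108 \<in> B 2) \<and> \<not> (109 \<in> B 0 \<and> 109 \<in> B 2)" using n[of 0 2] by simp
  have n03: "\<not> (108 \<in> B 0 \<and> 108 \<in> B 3) \<and> \<not> (109 \<in> B 0 \<and> 109 \<in> B 3)" using n[of 0 3] by simp
  have n12: "\<not> (108 \<in> B 1 \<and> 108 \<in> B 2) \<and> \<not> (109 \<in> B 1 \<and> 109 \<in> B 2)" using n[of 1 2] by simp
  have n13: "\<not> (108 \<in> B 1 \<and> 108 \<in> B 3) \<and> \<not> (109 \<in> B 1 \<and> 109 \<in> B 3)" using n[of 1 3] by simp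
  have n23: "\<not> (108 \<in> B 2 \<and> 108 \<in> B 3) \<and> \<not> (109 \<in> B 2 \<and> 109 \<in> B 3)" using n[of 2 3] by simp
  have c01: "\<not> (108 \<notin> B 0 \<and> 109 \<notin> B 0 \<and> 108 \<notin> B 1 \<and> 109 \<notin> B 1)" using core[OF M1 M2, of 0 1] by auto
  have c02: "\<not> (108 \<notin> B 0 \<and> 109 \<notin> B 0 \<and> 108 \<notin> B 2 \<and> 109 \<notin> B 2)" using core[OF M1 M2, of 0 2] by auto
  have c03: "\<not> (108 \<notin> B 0 \<and> 109 \<notin> B 0 \<and> 108 \<notin> B 3 \<and> 109 \<notin> B 3)" using core[OF M1 M2, of 0 3] by auto
  have c12: "\<not> (108 \<notin> B 1 \<and> 109 \<notin> B 1 \<and> 108 \<notin> B 2 \<and> 109 \<notin> B 2)" using core[OF M1 M2, of 1 2] by auto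
  have c13: "\<not> (108 \<notin> B 1 \<and> 109 \<notin> B 1 \<and> 108 \<notin> B 3 \<and> 109 \<notin> B 3)" using core[OF M1 M2, of 1 3] by auto
  have c23: "\<not> (108 \<notin> B 2 \<and> 109 \<notin> B 2 \<and> 108 \<notin> B 3 \<and> 109 \<notin> B 3)" using core[OF M1 M2, of 2 3] by auto
  show False using n01 n02 n03 n12 n13 n23 c01 c02 c03 c12 c13 c23 by blast
qed



definition col :: "nat \<Rightarrow> bool" where
  "col v = (if v < 108 then odd v else v = 109 \<or> (110 \<le> v \<and> v < 119))"

lemma F3: "list_all (\<lambda>u. list_all (\<lambda>v. col u \<noteq> col v) (nb u)) [0..<128]"
  unfolding col_def by code_simp

lemma GE_col: assumes "GE u v" shows "col u \<noteq> col v"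
proof -
  have u: "u < 128" using GE_props[OF assms(1)] by simp
  have v: "v \<in> set (nb u)" using assms(1) by (simp only: GE_def)
  show ?thesis using la_mem[OF la_upt[OF F3 u] v] .
qed

lemma F2: "list_all (\<lambda>x. list_all (\<lambda>w. list_all (\<lambda>y. w = y \<or> list_all (\<lambda>z. z \<in> set (nb y) \<longrightarrow> z = x) (nb w)) (nb x)) (nb x)) [0..<128]"
  by code_simp

lemma no4: assumes "GE w x" "GE x y" "GE y z" "GE z w" "w \<noteq> y" "x \<noteq> z" shows False
proof -
  have x: "x < 128" using GE_props[OF assms(2)] by simp
  have m: "w \<in> set (nb x)" "y \<in> set (nb x)" "z \<in> set (nb w)" "z \<in> set (nb y)"
    using assms GE_sym unfolding GE_def by blast+
  have "w = y \<or> list_all (\<lambda>z. z \<in> set (nb y) \<longrightarrow> z = x) (nb w)"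
    using la_mem[OF la_mem[OF la_upt[OF F2 x] m(1)] m(2)] .
  then have "z \<in> set (nb y) \<longrightarrow> z = x" using assms(5) la_mem m(3) by fastforce
  then show False using m(4) assms(6) by simp
qed

lemma girth6: "has_girth GE 6"
  unfolding has_girth_def
proof (intro conjI allI impI)
  show "\<exists>cs. is_cycle GE cs \<and> length cs = 6"
  proof (intro exI conjI)
    show "is_cycle GE [108, 110, 119, 109, 120, 111]"
      unfolding is_cycle_def
    proof (intro conjI allI impI)
      fix i :: nat assume "i < length [108::nat, 110, 119, 109, 120, 111]"
      then have "i = 0 \<or> i = 1 \<or> i = 2 \<or> i = 3 \<or> i = 4 \<or> i = 5" by auto
      then show "GE ([108::nat, 110, 119, 109, 120, 111] ! i) ([108::nat, 110, 119, 109, 120, 111] ! ((i + 1) mod length [108::nat, 110, 119, 109, 120, 111]))"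
        by (elim disjE) (simp_all add: GE_def nb_def)
    qed simp_all
  qed simp
next
  fix cs assume c: "is_cycle GE cs"
  let ?n = "length cs"
  have n3: "3 \<le> ?n" and dis: "distinct cs" and e: "\<And>i. i < ?n \<Longrightarrow> GE (cs ! i) (cs ! ((i + 1) mod ?n))"
    using c unfolding is_cycle_def by auto
  have dn: "\<And>i j. i < ?n \<Longrightarrow> j < ?n \<Longrightarrow> i \<noteq> j \<Longrightarrow> cs ! i \<noteq> cs ! j"
    using dis by (simp add: nth_eq_iff_index_eq)
  show "6 \<le> ?n"
  proof (rule ccontr)
    assume "\<not> 6 \<le> ?n"
    then have "?n = 3 \<or> ?n = 4 \<or> ?n = 5" using n3 by auto
    then show False
    proof (elim disjE)
      assume n: "?n = 3"
      have "GE (cs!0) (cs!1)" "GE (cs!2) (cs!0)"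
        using e[of 0] e[of 2] n by simp_all
      moreover have "GE (cs!1) (cs!2)" using e[of 1] n by (simp add: numeral_2_eq_2)
      ultimately have "col (cs!0) \<noteq> col (cs!1)" "col (cs!1) \<noteq> col (cs!2)" "col (cs!2) \<noteq> col (cs!0)"
        using GE_col by blast+
      then show False by blast
    next
      assume n: "?n = 5"
      have "GE (cs!0) (cs!1)" "GE (cs!2) (cs!3)" "GE (cs!3) (cs!4)" "GE (cs!4) (cs!0)"
        using e[of 0] e[of 2] e[of 3] e[of 4] n by simp_all
      moreover have "GE (cs!1) (cs!2)" using e[of 1] n by (simp add: numeral_2_eq_2)
      ultimately have "col (cs!0) \<noteq> col (cs!1)" "col (cs!1) \<noteq> col (cs!2)" "col (cs!2) \<noteq> col (cs!3)"
        "col (cs!3) \<noteq> col (cs!4)" "col (cs!4) \<noteq> col (cs!0)"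
        using GE_col by blast+
      then show False by blast
    next
      assume n: "?n = 4"
      have "GE (cs!0) (cs!1)" "GE (cs!2) (cs!3)" "GE (cs!3) (cs!0)"
        using e[of 0] e[of 2] e[of 3] n by simp_all
      moreover have "GE (cs!1) (cs!2)" using e[of 1] n by (simp add: numeral_2_eq_2)
      moreover have "cs!0 \<noteq> cs!2" "cs!1 \<noteq> cs!3" using dn n by simp_all
      ultimately show False using no4 by blast
    qed
  qed
qed

lemma simple: "simple_graph {..<128} GE"
  unfolding simple_graph_def using GE_props by auto

lemma few_impure:
  fixes f :: "nat \<Rightarrow> nat"
  assumes g: "good lo hi" and f: "inj_on f {..<9}" and e: "\<forall>i<9. GE u (f i)"
  shows "card {i. i < 9 \<and> \<not> pR lo hi u (f i) \<and> \<not> pL lo hi u (f i)} \<le> 4"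
proof -
  note g' = g[unfolded good_def]
  have H2: "\<And>u v. GE u v \<Longrightarrow> hi u = lo v \<or> hi v = lo u" using g'[THEN conjunct2, THEN conjunct1] by blast
  have MidR: "\<And>u v1 v2 v3. GE u v1 \<Longrightarrow> GE u v2 \<Longrightarrow> GE u v3 \<Longrightarrow> v1 \<noteq> v2 \<Longrightarrow> v1 \<noteq> v3 \<Longrightarrow> v2 \<noteq> v3 \<Longrightarrow>
        lo v1 = hi u \<Longrightarrow> lo v2 = hi u \<Longrightarrow> lo v3 = hi u \<Longrightarrow>
        pR lo hi u v1 \<or> pR lo hi u v2 \<or> pR lo hi u v3" using g'[THEN conjunct2, THEN conjunct2, THEN conjunct1] by blast
  have MidL: "\<And>u v1 v2 v3. GE u v1 \<Longrightarrow> GE u v2 \<Longrightarrow> GE u v3 \<Longrightarrow> v1 \<noteq> v2 \<Longrightarrow> v1 \<noteq> v3 \<Longrightarrow> v2 \<noteq> v3 \<Longrightarrow>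
        hi v1 = lo u \<Longrightarrow> hi v2 = lo u \<Longrightarrow> hi v3 = lo u \<Longrightarrow>
        pL lo hi u v1 \<or> pL lo hi u v2 \<or> pL lo hi u v3" using g'[THEN conjunct2, THEN conjunct2, THEN conjunct2] by blast
  define IR where "IR = {i. i < 9 \<and> lo (f i) = hi u \<and> \<not> pR lo hi u (f i)}"
  define IL where "IL = {i. i < 9 \<and> hi (f i) = lo u \<and> \<not> pL lo hi u (f i)}"
  have fin: "finite IR" "finite IL" unfolding IR_def IL_def by auto
  have cR: "card IR \<le> 2"
  proof (rule ccontr)
    assume "\<not> card IR \<le> 2"
    then have "3 \<le> card IR" by simp
    then obtain T where T: "T \<subseteq> IR" "card T = 3" using obtain_subset_with_card_n by blast
    then obtain x y z where xyz: "T = {x, y, z}" "x \<noteq> y" "y \<noteq> z" "x \<noteq> z" using card_3_iff by metis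
    have m: "x \<in> IR" "y \<in> IR" "z \<in> IR" using T xyz by auto
    have fx: "f x \<noteq> f y" "f x \<noteq> f z" "f y \<noteq> f z"
      using m xyz f unfolding IR_def inj_on_def by auto
    show False using MidR[of u "f x" "f y" "f z"] e m fx unfolding IR_def by auto
  qed
  have cL: "card IL \<le> 2"
  proof (rule ccontr)
    assume "\<not> card IL \<le> 2"
    then have "3 \<le> card IL" by simp
    then obtain T where T: "T \<subseteq> IL" "card T = 3" using obtain_subset_with_card_n by blast
    then obtain x y z where xyz: "T = {x, y, z}" "x \<noteq> y" "y \<noteq> z" "x \<noteq> z" using card_3_iff by metis
    have m: "x \<in> IL" "y \<in> IL" "z \<in> IL" using T xyz by auto
    have fx: "f x \<noteq> f y" "f x \<noteq> f z" "f y \<noteq> f z"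
      using m xyz f unfolding IL_def inj_on_def by auto
    show False using MidL[of u "f x" "f y" "f z"] e m fx unfolding IL_def by auto
  qed
  have "{i. i < 9 \<and> \<not> pR lo hi u (f i) \<and> \<not> pL lo hi u (f i)} \<subseteq> IR \<union> IL"
    using H2 e unfolding IR_def IL_def by fastforce
  then have "card {i. i < 9 \<and> \<not> pR lo hi u (f i) \<and> \<not> pL lo hi u (f i)} \<le> card (IR \<union> IL)"
    using fin by (simp add: card_mono)
  also have "\<dots> \<le> card IR + card IL" by (rule card_Un_le)
  finally show ?thesis using cR cL by simp
qed

lemma select:
  assumes g: "good lo hi"
  shows "\<exists>i<9. (pR lo hi 108 (110+i) \<or> pL lo hi 108 (110+i)) \<and> (pR lo hi 109 (119+i) \<or> pL lo hi 109 (119+i))"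
proof (rule ccontr)
  assume na: "\<not> ?thesis"
  have nb108: "nb 108 = [110..<119]" and nb109: "nb 109 = [119..<128]" by (simp_all add: nb_def)
  have ea: "\<forall>i<9. GE 108 (110 + i)"
  proof (intro allI impI)
    fix i :: nat assume "i < 9"
    then have "110 + i \<in> {110..<119}" by simp
    then show "GE 108 (110 + i)" unfolding GE_def nb108 set_upt .
  qed
  have eb: "\<forall>i<9. GE 109 (119 + i)"
  proof (intro allI impI)
    fix i :: nat assume "i < 9"
    then have "119 + i \<in> {119..<128}" by simp
    then show "GE 109 (119 + i)" unfolding GE_def nb109 set_upt .
  qed
  have ca: "card {i. i < 9 \<and> \<not> pR lo hi 108 (110+i) \<and> \<not> pL lo hi 108 (110+i)} \<le> 4"
    using few_impure[OF g _ ea] by (simp add: inj_on_def)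
  have cb: "card {i. i < 9 \<and> \<not> pR lo hi 109 (119+i) \<and> \<not> pL lo hi 109 (119+i)} \<le> 4"
    using few_impure[OF g _ eb] by (simp add: inj_on_def)
  have "{..<9} \<subseteq> {i. i < 9 \<and> \<not> pR lo hi 108 (110+i) \<and> \<not> pL lo hi 108 (110+i)} \<union>
      {i. i < 9 \<and> \<not> pR lo hi 109 (119+i) \<and> \<not> pL lo hi 109 (119+i)}" using na by auto
  then have "card {..<(9::nat)} \<le> card ({i. i < 9 \<and> \<not> pR lo hi 108 (110+i) \<and> \<not> pL lo hi 108 (110+i)} \<union>
      {i. i < 9 \<and> \<not> pR lo hi 109 (119+i) \<and> \<not> pL lo hi 109 (119+i)})"
    by (intro card_mono) auto
  also have "\<dots> \<le> 8" using card_Un_le[of "{i. i < 9 \<and> \<not> pR lo hi 108 (110+i) \<and> \<not> pL lo hi 108 (110+i)}"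
      "{i. i < 9 \<and> \<not> pR lo hi 109 (119+i) \<and> \<not> pL lo hi 109 (119+i)}"] ca cb by linarith
  finally show False by simp
qed

lemma notCBU: "\<not> in_2CBU {..<(128::nat)} GE"
proof
  assume "in_2CBU {..<(128::nat)} GE"
  then obtain lo hi where g: "good lo hi" using cbu_good by blast
  obtain i where i: "i < 9" and a: "pR lo hi 108 (110+i) \<or> pL lo hi 108 (110+i)"
    and b: "pR lo hi 109 (119+i) \<or> pL lo hi 109 (119+i)" using select[OF g] by blast
  show False
  proof (cases "pR lo hi 108 (110+i)")
    case True
    then show False using half[OF g i True b] by blast
  next
    case False
    then have "pR (\<lambda>v. - hi v) (\<lambda>v. - lo v) 108 (110+i)" using a pR_mirror by simp
    moreover have "pR (\<lambda>v. - hi v) (\<lambda>v. - lo v) 109 (119+i) \<or> pL (\<lambda>v. - hi v) (\<lambda>v. - lo v) 109 (119+i)"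
      using b pR_mirror pL_mirror by blast
    ultimately show False using half[OF good_mirror[OF g] i] by blast
  qed
qed

theorem mainTheorem4:
  shows "\<exists>(V :: nat set) E. series_parallel V E \<and> has_girth E 6 \<and> \<not> in_2CBU V E"
  using simple noK4 girth6 notCBU unfolding series_parallel_def by blast

end
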